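(* Let $\psi(x,y)=\binom{x}{y}$. For every $L\in\mathcal F_x(\psi)$ there is a unique difference operator $R(y,\delta_y)$ with $L\cdot\psi=R\cdot\psi$, and the resulting map $b_\psi:\mathcal F_x(\psi)\to\mathcal F_y(\psi)$, $b_\psi(L)=R$, is a well-defined bijective linear map satisfying $b_\psi(L_1L_2)=b_\psi(L_2)b_\psi(L_1)$ for all $L_1,L_2\in\mathcal F_x(\psi)$; i.e. $b_\psi$ is an algebra anti-isomorphism.
   Context: $\mathbb N=\{0,1,2,\dots\}$; functions on $\mathbb N$ are extended by $0$ to negative arguments. Shifts: $(\delta_x f)(x)=f(x+1)$, $(\delta_x^* f)(x)=f(x-1)$. A difference operator in $x$ is a finite expression $L=\sum_{k=0}^n a_k(x)\delta_x^k+\sum_{k=1}^n a_{-k}(x)(\delta_x^k)^*$ with $a_k:\mathbb N\to\mathbb R$, acting by $(L f)(x)=\sum_{k=-n}^n a_k(x)f(x+k)$; these form an algebra under composition; similarly in $y$. Operators in $x$ act on $\psi(x,y)$ for fixed $y$, operators in $y$ for fixed $x$. The left and right Fourier algebras are $\mathcal F_x(\psi)=\{L(x,\delta_x):\ L\cdot\psi=R\cdot\psi \text{ for some difference operator } R(y,\delta_y)\}$ and $\mathcal F_y(\psi)=\{R(y,\delta_y):\ L\cdot\psi=R\cdot\psi\text{ for some difference operator } L(x,\delta_x)\}$. *)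

theory Defs
  imports Complex_Main
begin

definition ext0 :: "(nat \<Rightarrow> real) \<Rightarrow> int \<Rightarrow> real" where
  "ext0 f i = (if i < 0 then 0 else f (nat i))"

text \<open>Difference operators are identified with
  their action on functions N -> R (this is how they compose).\<close>
definition diff_op_action :: "nat \<Rightarrow> (int \<Rightarrow> nat \<Rightarrow> real) \<Rightarrow> (nat \<Rightarrow> real) \<Rightarrow> nat \<Rightarrow> real" where
  "diff_op_action n a f x = (\<Sum>k\<in>{-int n..int n}. a k x * ext0 f (int x + k))"

definition diff_ops :: "((nat \<Rightarrow> real) \<Rightarrow> (nat \<Rightarrow> real)) set" where
  "diff_ops = {L. \<exists>n a. L = diff_op_action n a}"

definition psi :: "nat \<Rightarrow> nat \<Rightarrow> real" where
  "psi x y = real (x choose y)"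

definition intertwines :: "((nat \<Rightarrow> real) \<Rightarrow> (nat \<Rightarrow> real)) \<Rightarrow> ((nat \<Rightarrow> real) \<Rightarrow> (nat \<Rightarrow> real)) \<Rightarrow> bool" where
  "intertwines L R \<longleftrightarrow> (\<forall>x y. L (\<lambda>x'. psi x' y) x = R (\<lambda>y'. psi x y') y)"

definition Fx :: "((nat \<Rightarrow> real) \<Rightarrow> (nat \<Rightarrow> real)) set" where
  "Fx = {L \<in> diff_ops. \<exists>R \<in> diff_ops. intertwines L R}"

definition Fy :: "((nat \<Rightarrow> real) \<Rightarrow> (nat \<Rightarrow> real)) set" where
  "Fy = {R \<in> diff_ops. \<exists>L \<in> diff_ops. intertwines L R}"

definition b_psi :: "((nat \<Rightarrow> real) \<Rightarrow> (nat \<Rightarrow> real)) \<Rightarrow> ((nat \<Rightarrow> real) \<Rightarrow> (nat \<Rightarrow> real))" where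
  "b_psi L = (THE R. R \<in> diff_ops \<and> intertwines L R)"

definition op_add :: "((nat \<Rightarrow> real) \<Rightarrow> (nat \<Rightarrow> real)) \<Rightarrow> ((nat \<Rightarrow> real) \<Rightarrow> (nat \<Rightarrow> real)) \<Rightarrow> ((nat \<Rightarrow> real) \<Rightarrow> (nat \<Rightarrow> real))" where
  "op_add L1 L2 = (\<lambda>f x. L1 f x + L2 f x)"

definition op_scale :: "real \<Rightarrow> ((nat \<Rightarrow> real) \<Rightarrow> (nat \<Rightarrow> real)) \<Rightarrow> ((nat \<Rightarrow> real) \<Rightarrow> (nat \<Rightarrow> real))" where
  "op_scale c L = (\<lambda>f x. c * L f x)"

end

theory Submission
  imports Defs
begin

lemma action_pad:
  assumes "n \<le> N"
  shows "diff_op_action n a = diff_op_action N (\<lambda>k x. if k \<in> {-int n..int n} then a k x else 0)"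
proof (intro ext)
  fix f x
  have sub: "{-int N..int N} \<inter> {-int n..int n} = {-int n..int n}" using assms by auto
  have "(\<Sum>k\<in>{-int N..int N}. (if k \<in> {-int n..int n} then a k x else 0) * ext0 f (int x + k))
      = (\<Sum>k\<in>{-int N..int N}. (if k \<in> {-int n..int n} then a k x * ext0 f (int x + k) else 0))"
    by (rule sum.cong) auto
  also have "\<dots> = (\<Sum>k\<in>{-int N..int N} \<inter> {-int n..int n}. a k x * ext0 f (int x + k))"
    by (rule sum.inter_restrict[symmetric]) simp
  finally show "diff_op_action n a f x = diff_op_action N (\<lambda>k x. if k \<in> {-int n..int n} then a k x else 0) f x"
    unfolding diff_op_action_def sub by simp
qed

lemma common:
  assumes "A \<in> diff_ops" "B \<in> diff_ops"
  shows "\<exists>N a b. A = diff_op_action N a \<and> B = diff_op_action N b"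
proof -
  obtain n a where A: "A = diff_op_action n a" using assms(1) unfolding diff_ops_def by blast
  obtain m b where B: "B = diff_op_action m b" using assms(2) unfolding diff_ops_def by blast
  show ?thesis
    using A B action_pad[of n "max n m" a] action_pad[of m "max n m" b] by auto
qed

lemma action_in: "diff_op_action n a \<in> diff_ops"
  unfolding diff_ops_def by blast

lemma add_closed:
  assumes "A \<in> diff_ops" "B \<in> diff_ops" shows "op_add A B \<in> diff_ops"
proof -
  obtain N a b where AB: "A = diff_op_action N a" "B = diff_op_action N b" using common[OF assms] by blast
  have "op_add A B = diff_op_action N (\<lambda>k x. a k x + b k x)"
    unfolding AB op_add_def diff_op_action_def by (simp add: sum.distrib distrib_right)
  thus ?thesis by (simp add: action_in)
qed

lemma scale_closed:
  assumes "A \<in> diff_ops" shows "op_scale c A \<in> diff_ops"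
proof -
  obtain n a where A: "A = diff_op_action n a" using assms unfolding diff_ops_def by blast
  have "op_scale c A = diff_op_action n (\<lambda>k x. c * a k x)"
    unfolding A op_scale_def diff_op_action_def by (simp add: sum_distrib_left mult.assoc)
  thus ?thesis by (simp add: action_in)
qed

lemma ext0_sum: "ext0 (\<lambda>x. \<Sum>j\<in>J. c j * g j x) i = (\<Sum>j\<in>J. c j * ext0 (g j) i)"
  unfolding ext0_def by simp

lemma action_lin:
  assumes "L \<in> diff_ops"
  shows "L (\<lambda>x. \<Sum>j\<in>J. c j * g j x) x = (\<Sum>j\<in>J. c j * L (g j) x)"
proof -
  obtain n a where A: "L = diff_op_action n a" using assms unfolding diff_ops_def by blast
  show ?thesis unfolding A diff_op_action_def ext0_sum
    by (simp add: sum_distrib_left mult.left_commute sum.swap[of _ J])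
qed

lemma action_zero:
  assumes "L \<in> diff_ops" shows "L (\<lambda>_. 0) x = 0"
proof -
  obtain n a where A: "L = diff_op_action n a" using assms unfolding diff_ops_def by blast
  show ?thesis unfolding A diff_op_action_def ext0_def by simp
qed

lemma comp_closed:
  "diff_op_action n1 a1 \<circ> diff_op_action n2 a2 \<in> diff_ops"
proof -
  let ?I1 = "{-int n1..int n1}" and ?I2 = "{-int n2..int n2}" and ?I3 = "{-int (n1+n2)..int (n1+n2)}"
  define B where "B x k j = (if int x + k < 0 then 0 else a1 k x * a2 j (nat (int x + k)))" for x k j
  define c where "c m x = (\<Sum>k\<in>?I1. \<Sum>j\<in>?I2. if k + j = m then B x k j else 0)" for m x
  have "diff_op_action n1 a1 \<circ> diff_op_action n2 a2 = diff_op_action (n1+n2) c"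
  proof (intro ext)
    fix f x
    have step: "a1 k x * ext0 (diff_op_action n2 a2 f) (int x + k) = (\<Sum>j\<in>?I2. B x k j * ext0 f (int x + k + j))" for k
      unfolding B_def ext0_def[of "diff_op_action n2 a2 f"] diff_op_action_def
      by (auto simp: sum_distrib_left mult.assoc)
    have "(diff_op_action n1 a1 \<circ> diff_op_action n2 a2) f x = (\<Sum>k\<in>?I1. \<Sum>j\<in>?I2. B x k j * ext0 f (int x + k + j))"
      unfolding comp_def diff_op_action_def[of n1] using step by simp
    also have "\<dots> = (\<Sum>k\<in>?I1. \<Sum>j\<in>?I2. \<Sum>m\<in>?I3. if k + j = m then B x k j * ext0 f (int x + m) else 0)"
    proof (rule sum.cong[OF refl], rule sum.cong[OF refl])
      fix k j assume "k \<in> ?I1" "j \<in> ?I2"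
      hence "k + j \<in> ?I3" by auto
      thus "B x k j * ext0 f (int x + k + j) = (\<Sum>m\<in>?I3. if k + j = m then B x k j * ext0 f (int x + m) else 0)"
        by (simp add: sum.delta add.assoc)
    qed
    also have "\<dots> = (\<Sum>m\<in>?I3. \<Sum>k\<in>?I1. \<Sum>j\<in>?I2. if k + j = m then B x k j * ext0 f (int x + m) else 0)"
      by (subst sum.swap, rule sum.cong[OF refl], rule sum.swap)
    also have "\<dots> = diff_op_action (n1+n2) c f x"
      unfolding diff_op_action_def c_def sum_distrib_right
      by (intro sum.cong refl) simp
    finally show "(diff_op_action n1 a1 \<circ> diff_op_action n2 a2) f x = diff_op_action (n1+n2) c f x" .
  qed
  thus ?thesis by (simp add: action_in)
qed
lemma indep_y:
  assumes fin: "finite K" and H: "\<And>x. (\<Sum>k\<in>K. c k * ext0 (\<lambda>j. psi x j) (yy + k)) = 0"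
    and kK: "k \<in> K" and pos: "yy + k \<ge> 0"
  shows "c k = 0"
proof -
  have main: "\<forall>k\<in>K. yy + k = int m \<longrightarrow> c k = 0" for m
  proof (induction m rule: less_induct)
    case (less m)
    have "(\<Sum>k\<in>K. c k * ext0 (\<lambda>j. psi m j) (yy + k)) = (\<Sum>k\<in>K. if k = int m - yy then c k else 0)"
    proof (rule sum.cong[OF refl])
      fix k assume k: "k \<in> K"
      show "c k * ext0 (\<lambda>j. psi m j) (yy + k) = (if k = int m - yy then c k else 0)"
      proof (cases "yy + k < 0")
        case True thus ?thesis by (auto simp: ext0_def)
      next
        case False
        then obtain j where j: "yy + k = int j" by (metis nonneg_int_cases not_less)
        show ?thesis
        proof (cases "j < m")
          case True thus ?thesis using less.IH[of j] k j by (auto simp: ext0_def)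
        next
          case False
          show ?thesis
          proof (cases "j = m")
            case True thus ?thesis using j by (auto simp: ext0_def psi_def)
          next
            case False
            with \<open>\<not> j < m\<close> have "m < j" by simp
            thus ?thesis using j by (auto simp: ext0_def psi_def)
          qed
        qed
      qed
    qed
    also have "\<dots> = (if int m - yy \<in> K then c (int m - yy) else 0)"
      using fin by (simp add: sum.delta)
    finally have E: "(if int m - yy \<in> K then c (int m - yy) else 0) = 0" using H[of m] by simp
    show ?case
    proof (intro ballI impI)
      fix k assume "k \<in> K" "yy + k = int m"
      moreover hence "int m - yy = k" by simp
      ultimately show "c k = 0" using E by simp
    qed
  qed
  show ?thesis using main[of "nat (yy + k)"] kK pos by auto
qed

lemma indep_x:
  assumes fin: "finite K" and H: "\<And>y. (\<Sum>k\<in>K. c k * ext0 (\<lambda>j. psi j y) (xx + k)) = 0"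
    and kK: "k \<in> K" and pos: "xx + k \<ge> 0"
  shows "c k = 0"
proof (rule ccontr)
  assume nz: "c k \<noteq> 0"
  define S where "S = {k\<in>K. xx + k \<ge> 0 \<and> c k \<noteq> 0}"
  have Sfin: "finite S" using fin unfolding S_def by simp
  have "k \<in> S" using nz kK pos unfolding S_def by simp
  hence Sne: "S \<noteq> {}" by auto
  define ks where "ks = Max S"
  have ksS: "ks \<in> S" unfolding ks_def using Sfin Sne by simp
  have ksmax: "k' \<le> ks" if "k' \<in> S" for k' unfolding ks_def using Sfin that by simp
  define y where "y = nat (xx + ks)"
  have ypos: "int y = xx + ks" using ksS unfolding S_def y_def by simp
  have "(\<Sum>k\<in>K. c k * ext0 (\<lambda>j. psi j y) (xx + k)) = (\<Sum>k\<in>K. if k = ks then c k else 0)"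
  proof (rule sum.cong[OF refl])
    fix k assume k: "k \<in> K"
    show "c k * ext0 (\<lambda>j. psi j y) (xx + k) = (if k = ks then c k else 0)"
    proof (cases "xx + k < 0")
      case True
      hence "k \<noteq> ks" using ypos by auto
      thus ?thesis using True by (auto simp: ext0_def)
    next
      case False
      show ?thesis
      proof (cases "c k = 0")
        case True thus ?thesis by auto
      next
        case cnz: False
        hence "k \<in> S" using k False unfolding S_def by simp
        hence "k \<le> ks" by (rule ksmax)
        show ?thesis
        proof (cases "k = ks")
          case True thus ?thesis using ypos \<open>\<not> xx + k < 0\<close> by (simp add: ext0_def psi_def y_def)
        next
          case False
          with \<open>k \<le> ks\<close> have "nat (xx + k) < y" using ypos \<open>\<not> xx + k < 0\<close> by linarith
          thus ?thesis using False \<open>\<not> xx + k < 0\<close> by (simp add: ext0_def psi_def)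
        qed
      qed
    qed
  qed
  also have "\<dots> = c ks" using fin ksS unfolding S_def by (simp add: sum.delta)
  finally have "c ks = 0" using H[of y] by simp
  thus False using ksS unfolding S_def by simp
qed

lemma uniq_R:
  assumes "R1 \<in> diff_ops" "R2 \<in> diff_ops"
    and H: "\<And>x y. R1 (\<lambda>y'. psi x y') y = R2 (\<lambda>y'. psi x y') y"
  shows "R1 = R2"
proof (intro ext)
  fix f y
  obtain N a b where AB: "R1 = diff_op_action N a" "R2 = diff_op_action N b" using common[OF assms(1,2)] by blast
  have D: "R1 g y - R2 g y = (\<Sum>k\<in>{-int N..int N}. (a k y - b k y) * ext0 g (int y + k))" for g
    unfolding AB diff_op_action_def by (simp add: sum_subtractf left_diff_distrib)
  have z: "a k y - b k y = 0" if "k \<in> {-int N..int N}" "int y + k \<ge> 0" for k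
    by (rule indep_y[where K="{-int N..int N}" and yy="int y", OF _ _ that]) (simp, subst D[symmetric], simp add: H)
  have "(\<Sum>k\<in>{-int N..int N}. (a k y - b k y) * ext0 f (int y + k)) = 0"
    by (rule sum.neutral) (use z in \<open>auto simp: ext0_def\<close>)
  thus "R1 f y = R2 f y" using D[of f] by simp
qed

lemma uniq_L:
  assumes "L1 \<in> diff_ops" "L2 \<in> diff_ops"
    and H: "\<And>x y. L1 (\<lambda>x'. psi x' y) x = L2 (\<lambda>x'. psi x' y) x"
  shows "L1 = L2"
proof (intro ext)
  fix f x
  obtain N a b where AB: "L1 = diff_op_action N a" "L2 = diff_op_action N b" using common[OF assms(1,2)] by blast
  have D: "L1 g x - L2 g x = (\<Sum>k\<in>{-int N..int N}. (a k x - b k x) * ext0 g (int x + k))" for g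
    unfolding AB diff_op_action_def by (simp add: sum_subtractf left_diff_distrib)
  have z: "a k x - b k x = 0" if "k \<in> {-int N..int N}" "int x + k \<ge> 0" for k
    by (rule indep_x[where K="{-int N..int N}" and xx="int x", OF _ _ that]) (simp, subst D[symmetric], simp add: H)
  have "(\<Sum>k\<in>{-int N..int N}. (a k x - b k x) * ext0 f (int x + k)) = 0"
    by (rule sum.neutral) (use z in \<open>auto simp: ext0_def\<close>)
  thus "L1 f x = L2 f x" using D[of f] by simp
qed

lemma uniq_R':
  assumes "R1 \<in> diff_ops" "R2 \<in> diff_ops" "intertwines L R1" "intertwines L R2"
  shows "R1 = R2"
  by (rule uniq_R[OF assms(1,2)]) (use assms(3,4) in \<open>simp add: intertwines_def\<close>)

lemma comp_in:
  assumes "A \<in> diff_ops" "B \<in> diff_ops" shows "A \<circ> B \<in> diff_ops"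
  using assms comp_closed unfolding diff_ops_def by blast

lemma comp_intertwines:
  assumes L1: "L1 \<in> diff_ops" and R1: "R1 \<in> diff_ops" and L2: "L2 \<in> diff_ops" and R2: "R2 \<in> diff_ops"
    and I1: "intertwines L1 R1" and I2: "intertwines L2 R2"
  shows "intertwines (L1 \<circ> L2) (R2 \<circ> R1)"
  unfolding intertwines_def
proof (intro allI)
  fix x y
  obtain m b where Rb: "R2 = diff_op_action m b" using R2 unfolding diff_ops_def by blast
  let ?J = "{-int m..int m}"
  define g where "g j = (\<lambda>x'. ext0 (\<lambda>y'. psi x' y') (int y + j))" for j
  have "L2 (\<lambda>x'. psi x' y) = (\<lambda>x'. \<Sum>j\<in>?J. b j y * g j x')"
    using I2 unfolding intertwines_def Rb diff_op_action_def g_def by auto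
  hence "(L1 \<circ> L2) (\<lambda>x'. psi x' y) x = (\<Sum>j\<in>?J. b j y * L1 (g j) x)"
    using action_lin[OF L1] by simp
  also have "\<dots> = (\<Sum>j\<in>?J. b j y * ext0 (R1 (\<lambda>y'. psi x y')) (int y + j))"
  proof (rule sum.cong[OF refl])
    fix j
    show "b j y * L1 (g j) x = b j y * ext0 (R1 (\<lambda>y'. psi x y')) (int y + j)"
    proof (cases "int y + j < 0")
      case True
      hence "g j = (\<lambda>_. 0)" unfolding g_def ext0_def by simp
      thus ?thesis using True action_zero[OF L1] by (simp add: ext0_def)
    next
      case False
      hence "g j = (\<lambda>x'. psi x' (nat (int y + j)))" unfolding g_def ext0_def by simp
      thus ?thesis using False I1 unfolding intertwines_def by (simp add: ext0_def)
    qed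
  qed
  also have "\<dots> = (R2 \<circ> R1) (\<lambda>y'. psi x y') y"
    unfolding Rb by (simp add: diff_op_action_def)
  finally show "(L1 \<circ> L2) (\<lambda>x'. psi x' y) x = (R2 \<circ> R1) (\<lambda>y'. psi x y') y" .
qed

lemma b_psi_props:
  assumes "L \<in> Fx" shows "b_psi L \<in> diff_ops \<and> intertwines L (b_psi L)"
proof -
  have ex: "\<exists>!R. R \<in> diff_ops \<and> intertwines L R"
    using assms uniq_R' unfolding Fx_def by blast
  show ?thesis unfolding b_psi_def by (rule theI'[OF ex])
qed

lemma b_psi_eq:
  assumes "L \<in> diff_ops" "R \<in> diff_ops" "intertwines L R" shows "b_psi L = R"
proof -
  have ex: "\<exists>!R. R \<in> diff_ops \<and> intertwines L R"
    using assms uniq_R' by blast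
  show ?thesis unfolding b_psi_def by (rule the1_equality[OF ex]) (use assms in auto)
qed

theorem mainTheorem2:
  shows "(\<forall>L \<in> Fx. \<exists>!R. R \<in> diff_ops \<and> intertwines L R)
    \<and> bij_betw b_psi Fx Fy
    \<and> (\<forall>L1 \<in> Fx. \<forall>L2 \<in> Fx. op_add L1 L2 \<in> Fx \<and> b_psi (op_add L1 L2) = op_add (b_psi L1) (b_psi L2))
    \<and> (\<forall>c. \<forall>L \<in> Fx. op_scale c L \<in> Fx \<and> b_psi (op_scale c L) = op_scale c (b_psi L))
    \<and> (\<forall>L1 \<in> Fx. \<forall>L2 \<in> Fx. L1 \<circ> L2 \<in> Fx \<and> b_psi (L1 \<circ> L2) = b_psi L2 \<circ> b_psi L1)"
proof (intro conjI ballI allI)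
  fix L assume "L \<in> Fx"
  thus "\<exists>!R. R \<in> diff_ops \<and> intertwines L R"
    using uniq_R' unfolding Fx_def by blast
next
  show "bij_betw b_psi Fx Fy"
    unfolding bij_betw_def
  proof
    show "inj_on b_psi Fx"
    proof (rule inj_onI)
      fix L1 L2 assume A: "L1 \<in> Fx" "L2 \<in> Fx" "b_psi L1 = b_psi L2"
      show "L1 = L2"
        using uniq_L[of L1 L2] A b_psi_props[OF A(1)] b_psi_props[OF A(2)]
        unfolding Fx_def intertwines_def by auto
    qed
    show "b_psi ` Fx = Fy"
    proof
      show "b_psi ` Fx \<subseteq> Fy" using b_psi_props unfolding Fy_def by (auto simp: Fx_def)
      show "Fy \<subseteq> b_psi ` Fx"
      proof
        fix R assume "R \<in> Fy"
        then obtain L where L: "L \<in> diff_ops" "intertwines L R" "R \<in> diff_ops" unfolding Fy_def by blast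
        hence "L \<in> Fx" unfolding Fx_def by blast
        moreover have "b_psi L = R" using b_psi_eq L by blast
        ultimately show "R \<in> b_psi ` Fx" by blast
      qed
    qed
  qed
next
  fix L1 L2 assume A: "L1 \<in> Fx" "L2 \<in> Fx"
  have P1: "L1 \<in> diff_ops" "L2 \<in> diff_ops" using A unfolding Fx_def by auto
  note B1 = b_psi_props[OF A(1)] and B2 = b_psi_props[OF A(2)]
  have I: "intertwines (op_add L1 L2) (op_add (b_psi L1) (b_psi L2))"
    using B1 B2 unfolding intertwines_def op_add_def by simp
  have D1: "op_add L1 L2 \<in> diff_ops" "op_add (b_psi L1) (b_psi L2) \<in> diff_ops"
    using P1 B1 B2 add_closed by auto
  show "op_add L1 L2 \<in> Fx" using I D1 unfolding Fx_def by blast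
  show "b_psi (op_add L1 L2) = op_add (b_psi L1) (b_psi L2)" using b_psi_eq D1 I by blast
  have I': "intertwines (L1 \<circ> L2) (b_psi L2 \<circ> b_psi L1)"
    using comp_intertwines P1 B1 B2 by blast
  have D2: "L1 \<circ> L2 \<in> diff_ops" "b_psi L2 \<circ> b_psi L1 \<in> diff_ops"
    using P1 B1 B2 comp_in by auto
  show "L1 \<circ> L2 \<in> Fx" using I' D2 unfolding Fx_def by blast
  show "b_psi (L1 \<circ> L2) = b_psi L2 \<circ> b_psi L1" using b_psi_eq D2 I' by blast
next
  fix c L assume A: "L \<in> Fx"
  have P: "L \<in> diff_ops" using A unfolding Fx_def by auto
  note B = b_psi_props[OF A]
  have I: "intertwines (op_scale c L) (op_scale c (b_psi L))"
    using B unfolding intertwines_def op_scale_def by simp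
  have D: "op_scale c L \<in> diff_ops" "op_scale c (b_psi L) \<in> diff_ops"
    using P B scale_closed by auto
  show "op_scale c L \<in> Fx" using I D unfolding Fx_def by blast
  show "b_psi (op_scale c L) = op_scale c (b_psi L)" using b_psi_eq D I by blast
qed

end
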